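(* Let $X$ be a real random variable and for $t\in\mathbb{R}$ let $L(t)=\mathbb{E}\left[\exp\left(tX-\frac{t^2}{2}X^2\right)\right]$. (1) If $X$ is heavy on left, then $L(t)\le1$ for all $t\ge0$. (2) If $X$ is heavy on right, then $L(t)\le 1$ for all $t\le0$. (3) If $X$ is symmetric (i.e. $X$ and $-X$ have the same distribution), then $L(t)\le1$ for all $t\in\mathbb{R}$.
   Context: For $a>0$ let $T_a(X)=\min(|X|,a)\,\mathrm{sign}(X)$ denote the truncation of $X$. An integrable random variable $X$ is called heavy on left if $\mathbb{E}[X]=0$ and $\mathbb{E}[T_a(X)]\le0$ for all $a>0$. It is called heavy on right if $-X$ is heavy on left. *)

theory Defs
  imports "HOL-Probability.Probability"
begin

definition trunc :: "real \<Rightarrow> real \<Rightarrow> real" where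
  "trunc a x = min \<bar>x\<bar> a * sgn x"

definition heavy_on_left :: "'a measure \<Rightarrow> ('a \<Rightarrow> real) \<Rightarrow> bool" where
  "heavy_on_left M X \<longleftrightarrow> integrable M X \<and> (\<integral>\<omega>. X \<omega> \<partial>M) = 0 \<and>
     (\<forall>a>0. (\<integral>\<omega>. trunc a (X \<omega>) \<partial>M) \<le> 0)"

definition heavy_on_right :: "'a measure \<Rightarrow> ('a \<Rightarrow> real) \<Rightarrow> bool" where
  "heavy_on_right M X \<longleftrightarrow> heavy_on_left M (\<lambda>\<omega>. - X \<omega>)"

definition symmetric_rv :: "'a measure \<Rightarrow> ('a \<Rightarrow> real) \<Rightarrow> bool" where
  "symmetric_rv M X \<longleftrightarrow> distr M borel X = distr M borel (\<lambda>\<omega>. - X \<omega>)"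

end

theory Submission imports Defs begin

lemma exp_up:
  fixes z :: real assumes "0 \<le> z" "z \<le> 1/2"
  shows "exp z \<le> 1 + z + z^2/2 + z^3/6 + z^4/12"
proof -
  obtain t where t: "\<bar>t\<bar> \<le> \<bar>z\<bar>" "exp z = (\<Sum>m<4. (z ^ m) / fact m) + (exp t / fact 4) * z ^ 4"
    using Maclaurin_exp_le[of z 4] by blast
  have "exp t \<le> exp (1/2)" using t(1) assms by simp
  also have "\<dots> \<le> 2" using real_exp_bound_lemma[of "1/2"] by simp
  finally have et: "exp t \<le> 2" .
  have s: "(\<Sum>m<4. (z ^ m) / fact m) = 1 + z + z^2/2 + z^3/6"
    by (simp add: numeral_eq_Suc fact_numeral power2_eq_square power3_eq_cube)
  have "(exp t / fact 4) * z ^ 4 \<le> (2 / 24) * z^4"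
    using et by (intro mult_right_mono) (auto simp: fact_numeral)
  thus ?thesis using t(2) s by simp
qed

lemma exp_neg_up:
  fixes x :: real assumes "0 \<le> x"
  shows "exp (-x) \<le> 1 - x + x^2/2 - x^3/6 + x^4/24"
proof -
  obtain t where t: "\<bar>t\<bar> \<le> \<bar>-x\<bar>" "exp (-x) = (\<Sum>m<5. ((-x) ^ m) / fact m) + (exp t / fact 5) * (-x) ^ 5"
    using Maclaurin_exp_le[of "-x" 5] by blast
  have s: "(\<Sum>m<5. ((-x) ^ m) / fact m) = 1 - x + x^2/2 - x^3/6 + x^4/24"
    by (simp add: numeral_eq_Suc fact_numeral power2_eq_square power3_eq_cube)
  have "(exp t / fact 5) * (-x) ^ 5 \<le> 0"
    using assms by (intro mult_nonneg_nonpos) (auto simp: power_odd_eq) 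
  thus ?thesis using t(2) s by simp
qed

definition hh :: "real \<Rightarrow> real" where
  "hh y = sgn y * (if \<bar>y\<bar> \<le> 1 then \<bar>y\<bar> - \<bar>y\<bar>^3/3 else 2/3)"

lemma caseA: fixes s :: real assumes "0 \<le> s" "s \<le> 1"
  shows "exp (s - s^2/2) \<le> 1 + s - s^3/3"
proof -
  define z where "z = s - s^2/2"
  have z: "0 \<le> z" "z \<le> 1/2" unfolding z_def using assms
  proof -
    have "s * s \<le> s" using assms by (simp add: mult_left_le_one_le)
    moreover have "0 \<le> (s - 1) * (s - 1)" by simp
    ultimately show "0 \<le> s - s^2/2" "s - s^2/2 \<le> 1/2" using assms by (auto simp: power2_eq_square algebra_simps)
  qed
  have "exp z \<le> 1 + z + z^2/2 + z^3/6 + z^4/12" by (rule exp_up[OF z])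
  also have "\<dots> \<le> 1 + s - s^3/3"
  proof -
    have "(1 + s - s^3/3) - (1 + z + z^2/2 + z^3/6 + z^4/12) = s^4/192 * (8*(1-s^2) + 8 * s*(1-s)^2 + s^2*(4-s^2))"
      unfolding z_def by (simp add: field_simps power2_eq_square power3_eq_cube power4_eq_xxxx) 
    moreover have "0 \<le> s^4/192 * (8*(1-s^2) + 8 * s*(1-s)^2 + s^2*(4-s^2))"
      using assms by (intro mult_nonneg_nonneg add_nonneg_nonneg) (auto simp: power2_eq_square mult_le_one intro: order_trans[of _ 1])
    ultimately show ?thesis by linarith
  qed
  finally show ?thesis unfolding z_def .
qed

lemma caseC: fixes s :: real assumes "0 \<le> s" "s \<le> 1"
  shows "exp (-s - s^2/2) \<le> 1 - s + s^3/3"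
proof -
  define x where "x = s + s^2/2"
  have x: "0 \<le> x" unfolding x_def using assms by simp
  have "exp (-s - s^2/2) = exp (-x)" unfolding x_def by simp
  also have "\<dots> \<le> 1 - x + x^2/2 - x^3/6 + x^4/24" by (rule exp_neg_up[OF x])
  also have "\<dots> \<le> 1 - s + s^3/3"
  proof -
    have "(1 - s + s^3/3) - (1 - x + x^2/2 - x^3/6 + x^4/24) = s^4/384 * (32 + 16 * s - 16 * s^2 - 8 * s^3 - s^4)"
      unfolding x_def by (simp add: field_simps power2_eq_square power3_eq_cube power4_eq_xxxx) 
    moreover have "s^2 \<le> 1" "s^3 \<le> 1" "s^4 \<le> 1" using assms by (auto simp: power_le_one)
    hence "0 \<le> s^4/384 * (32 + 16 * s - 16 * s^2 - 8 * s^3 - s^4)"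
      using assms by (intro mult_nonneg_nonneg) auto
    ultimately show ?thesis by linarith
  qed
  finally show ?thesis .
qed

lemma key: fixes y :: real shows "exp (y - y^2/2) - 1 \<le> hh y"
proof (cases "y \<ge> 0")
  case True
  show ?thesis
  proof (cases "y \<le> 1")
    case True thus ?thesis using caseA[of y] \<open>y \<ge> 0\<close> by (auto simp: hh_def sgn_if)
  next
    case False
    have "0 \<le> (y - 1)^2" by simp
    hence "y - y^2/2 \<le> 1/2" by (simp add: power2_eq_square algebra_simps)
    hence "exp (y - y^2/2) \<le> exp (1/2)" by simp
    also have "\<dots> \<le> 1 + 1/2 + (1/2)^2/2 + (1/2)^3/6 + (1/2)^4/12" by (rule exp_up) auto
    also have "\<dots> = 1 + 1/2 + 1/8 + 1/48 + 1/192" by (simp add: power_divide)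
    finally show ?thesis using False by (auto simp: hh_def sgn_if)
  qed
next
  case False
  define s where "s = -y"
  have s: "s > 0" "y = -s" using False s_def by auto
  show ?thesis
  proof (cases "s \<le> 1")
    case True thus ?thesis using caseC[of s] s by (auto simp: hh_def sgn_if)
  next
    case False
    have "1 \<le> s * s" using False s by (metis less_le_not_le linorder_le_cases mult_le_cancel_left1 order_trans)
    hence "y - y^2/2 \<le> -3/2" using s False by (simp add: power2_eq_square)
    hence "exp (y - y^2/2) \<le> exp (-3/2)" by simp
    also have "exp (-3/2) \<le> (1::real)/3"
    proof -
      have "1 + 3/2 + (3/2)^2/2 \<le> exp (3/2::real)" by (rule exp_lower_Taylor_quadratic) auto
      hence "3 \<le> exp (3/2::real)" by (simp add: power_divide)
      thus ?thesis by (simp add: exp_minus field_simps)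
    qed
    finally show ?thesis using False s by (auto simp: hh_def sgn_if)
  qed
qed

lemma intpow: assumes "0 \<le> w" shows "(\<integral>a. a^k * indicator {0..w} a \<partial>lborel) = w^Suc k / Suc k"
  using integral_power[of 0 w k] assms by simp

lemma intpow_int: "integrable lborel (\<lambda>a::real. a^k * indicator {0..w} a)"
  by (rule borel_integrable_atLeastAtMost) auto

lemma trunc_split: "trunc a y = sgn y * min \<bar>y\<bar> a"
  by (simp add: trunc_def)

lemma hh_int: "(\<integral>a. indicator {0..1} a * (2 * a * trunc a y) \<partial>lborel) = hh y"
proof -
  define w where "w = \<bar>y\<bar>"
  have w: "0 \<le> w" unfolding w_def by simp
  have eq1: "(\<lambda>a. indicator {0..1} a * (2 * a * trunc a y)) = (\<lambda>a. sgn y * (indicator {0..1} a * (2 * a * min w a)))"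
    by (auto simp: trunc_def w_def fun_eq_iff)
  have I: "(\<integral>a. indicator {0..1} a * (2 * a * min w a) \<partial>lborel) = (if w \<le> 1 then w - w^3/3 else 2/3)"
  proof (cases "w \<le> 1")
    case True
    have eqf: "(\<lambda>a. indicator {0..1} a * (2 * a * min w a)) = (\<lambda>a. 2 * (a^2 * indicator {0..w} a) + 2 * w * (a^1 * indicator {0..1} a) - 2 * w * (a^1 * indicator {0..w} a))"
      using True w by (auto simp: fun_eq_iff indicator_def min_def power2_eq_square)
    have ia: "integrable lborel (\<lambda>a. 2 * (a^2 * indicator {0..w} a :: real))" by (intro integrable_mult_right intpow_int)
    have ib: "integrable lborel (\<lambda>a. 2 * w * (a^1 * indicator {0..1} a :: real))" by (intro integrable_mult_right intpow_int)
    have ic: "integrable lborel (\<lambda>a. 2 * w * (a^1 * indicator {0..w} a :: real))" by (intro integrable_mult_right intpow_int)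
    have "(\<integral>a. indicator {0..1} a * (2 * a * min w a) \<partial>lborel) =
       2 * (\<integral>a. a^2 * indicator {0..w} a \<partial>lborel) + 2 * w * (\<integral>a. a^1 * indicator {0..1} a \<partial>lborel) - 2 * w * (\<integral>a. a^1 * indicator {0..w} a \<partial>lborel)"
      by (subst eqf, subst Bochner_Integration.integral_diff[OF Bochner_Integration.integrable_add[OF ia ib] ic], subst Bochner_Integration.integral_add[OF ia ib], simp del: power_one_right)
    also have "\<dots> = w - w^3/3" using w intpow[of w 1] intpow[of 1 1] intpow[of w 2] by simp (simp add: field_simps power2_eq_square power3_eq_cube)
    finally show ?thesis using True by simp
  next
    case False
    have "(\<lambda>a. indicator {0..1} a * (2 * a * min w a)) = (\<lambda>a. 2 * (a^2 * indicator {0..1} a))"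
      using False by (auto simp: fun_eq_iff indicator_def min_def power2_eq_square)
    hence "(\<integral>a. indicator {0..1} a * (2 * a * min w a) \<partial>lborel) = 2 * (\<integral>a. a^2 * indicator {0..1} a \<partial>lborel)"
      by simp
    also have "\<dots> = 2/3" by (simp add: intpow)
    finally show ?thesis using False by simp
  qed
  show ?thesis unfolding eq1 using I by (simp add: hh_def w_def)
qed

lemma hh_meas[measurable]: "hh \<in> borel_measurable borel"
  unfolding hh_def by measurable

lemma hh_bound: "\<bar>hh y\<bar> \<le> 1"
proof -
  have "0 \<le> \<bar>y\<bar> - \<bar>y\<bar>^3/3 \<and> \<bar>y\<bar> - \<bar>y\<bar>^3/3 \<le> 1" if "\<bar>y\<bar> \<le> 1"
  proof -
    have "\<bar>y\<bar>^3 \<le> \<bar>y\<bar>" using power_decreasing[of 1 3 "\<bar>y\<bar>"] that by simp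
    moreover have "0 \<le> \<bar>y\<bar>^3" by simp
    ultimately show ?thesis using that by linarith
  qed
  thus ?thesis by (auto simp: hh_def sgn_if abs_mult)
qed

lemma hh_odd: "hh (-y) = - hh y" by (simp add: hh_def)


lemma reduce:
  fixes M :: "'a measure" and X :: "'a \<Rightarrow> real"
  assumes P: "prob_space M" and Xm[measurable]: "X \<in> borel_measurable M"
    and h: "(\<integral>\<omega>. hh (t * X \<omega>) \<partial>M) \<le> 0"
  shows "(\<integral>\<omega>. exp (t * X \<omega> - t\<^sup>2 / 2 * (X \<omega>)\<^sup>2) \<partial>M) \<le> 1"
proof -
  interpret prob_space M by (rule P)
  have b: "exp (t * X \<omega> - t\<^sup>2 / 2 * (X \<omega>)\<^sup>2) \<le> 1 + hh (t * X \<omega>)" for \<omega>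
    using key[of "t * X \<omega>"] by (simp add: power_mult_distrib)
  have b2: "1 + hh (t * X \<omega>) \<le> 2" for \<omega> using hh_bound[of "t * X \<omega>"] by simp
  have ih: "integrable M (\<lambda>\<omega>. hh (t * X \<omega>))"
    by (rule integrable_const_bound[where B=1]) (auto simp: hh_bound)
  have ie: "integrable M (\<lambda>\<omega>. exp (t * X \<omega> - t\<^sup>2 / 2 * (X \<omega>)\<^sup>2))"
  proof (rule integrable_const_bound[where B=2])
    have "exp (t * X \<omega> - t\<^sup>2 / 2 * (X \<omega>)\<^sup>2) \<le> 2" for \<omega> using b[of \<omega>] b2[of \<omega>] by linarith
    thus "AE x in M. norm (exp (t * X x - t\<^sup>2 / 2 * (X x)\<^sup>2)) \<le> 2" by simp
  qed simp
  have "(\<integral>\<omega>. exp (t * X \<omega> - t\<^sup>2 / 2 * (X \<omega>)\<^sup>2) \<partial>M) \<le> (\<integral>\<omega>. 1 + hh (t * X \<omega>) \<partial>M)"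
    by (rule Bochner_Integration.integral_mono[OF ie]) (use ih b in auto)
  also have "\<dots> = 1 + (\<integral>\<omega>. hh (t * X \<omega>) \<partial>M)"
    using ih by (simp add: prob_space)
  finally show ?thesis using h by simp
qed

lemma trunc_scale: assumes "t > 0" shows "trunc a (t * x) = t * trunc (a / t) x"
proof -
  have "min (t * \<bar>x\<bar>) a = t * min \<bar>x\<bar> (a / t)" using assms
    by (simp add: min_def field_simps)
  thus ?thesis using assms by (simp add: trunc_def abs_mult sgn_mult)
qed

lemma trunc_bound: "0 \<le> a \<Longrightarrow> \<bar>trunc a y\<bar> \<le> a"
  by (auto simp: trunc_def abs_mult sgn_if)

lemma left_part:
  fixes M :: "'a measure" and X :: "'a \<Rightarrow> real"
  assumes P: "prob_space M" and Xm[measurable]: "X \<in> borel_measurable M"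
    and H: "heavy_on_left M X" and t: "t \<ge> 0"
  shows "(\<integral>\<omega>. hh (t * X \<omega>) \<partial>M) \<le> 0"
proof (cases "t = 0")
  case True thus ?thesis by (simp add: hh_def)
next
  case False
  hence tp: "t > 0" using t by simp
  interpret prob_space M by (rule P)
  interpret PS: pair_sigma_finite M lborel
    unfolding pair_sigma_finite_def using sigma_finite_measure_axioms lborel.sigma_finite_measure_axioms by blast
  define f where "f = (\<lambda>\<omega> a. indicator {0..1} a * (2 * a * (min \<bar>t * X \<omega>\<bar> a * sgn (t * X \<omega>))) :: real)"
  have ftr: "f \<omega> a = indicator {0..1} a * (2 * a * trunc a (t * X \<omega>))" for \<omega> a
    by (simp add: f_def trunc_def)
  have fm[measurable]: "case_prod f \<in> borel_measurable (M \<Otimes>\<^sub>M lborel)"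
    unfolding f_def by measurable
  have fb: "\<bar>f \<omega> a\<bar> \<le> 2 * (a^0 * indicator {0..1} a)" for \<omega> a
  proof (cases "a \<in> {0..1}")
    case True
    have tb: "\<bar>trunc a (t * X \<omega>)\<bar> \<le> 1" using trunc_bound[of a "t * X \<omega>"] True by auto
    have "a * \<bar>trunc a (t * X \<omega>)\<bar> \<le> 1" using True tb by (intro mult_le_one) auto
    hence "\<bar>2 * a * trunc a (t * X \<omega>)\<bar> \<le> 2 * 1 * 1" using True by (simp add: abs_mult)
    thus ?thesis using True by (simp add: ftr)
  qed (simp add: f_def)
  have i0: "integrable lborel (\<lambda>a. 2 * (a^0 * indicator {0..1} a :: real))"
    by (intro integrable_mult_right intpow_int)
  have fmw: "f \<omega> \<in> borel_measurable lborel" for \<omega>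
    unfolding f_def by measurable
  have fi: "integrable lborel (f \<omega>)" for \<omega>
    by (rule Bochner_Integration.integrable_bound[OF i0]) (use fb fmw in auto)
  have fi2: "integrable lborel (\<lambda>a. norm (f \<omega> a))" for \<omega>
    using fi by simp
  have nb: "norm (\<integral>a. norm (f \<omega> a) \<partial>lborel) \<le> 2" for \<omega>
  proof -
    have "(\<integral>a. norm (f \<omega> a) \<partial>lborel) \<le> (\<integral>a. 2 * (a^0 * indicator {0..1} a) \<partial>lborel)"
      by (rule Bochner_Integration.integral_mono[OF fi2 i0]) (use fb in auto)
    also have "\<dots> = 2" using intpow[of 1 0] by simp
    finally show ?thesis by simp
  qed
  have integ: "integrable (M \<Otimes>\<^sub>M lborel) (case_prod f)"
  proof (rule PS.Fubini_integrable)
    show "integrable M (\<lambda>x. \<integral>y. norm (case_prod f (x, y)) \<partial>lborel)"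
      by (rule integrable_const_bound[where B=2]) (use nb in auto)
    show "AE x in M. integrable lborel (\<lambda>y. case_prod f (x, y))" using fi by simp
  qed (rule fm)
  have "(\<integral>\<omega>. hh (t * X \<omega>) \<partial>M) = (\<integral>\<omega>. (\<integral>a. f \<omega> a \<partial>lborel) \<partial>M)"
    by (simp add: ftr hh_int)
  also have "\<dots> = (\<integral>a. (\<integral>\<omega>. f \<omega> a \<partial>M) \<partial>lborel)"
    using PS.Fubini_integral[OF integ] by simp
  also have "\<dots> \<le> 0"
  proof -
    have inner: "(\<integral>\<omega>. f \<omega> a \<partial>M) \<le> 0" for a
    proof (cases "a \<in> {0..1} \<and> a > 0")
      case True
      have "(\<integral>\<omega>. f \<omega> a \<partial>M) = (2 * a) * (t * (\<integral>\<omega>. trunc (a/t) (X \<omega>) \<partial>M))"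
        using True tp by (simp add: ftr trunc_scale)
      moreover have "(\<integral>\<omega>. trunc (a/t) (X \<omega>) \<partial>M) \<le> 0"
        using H True tp unfolding heavy_on_left_def by simp
      ultimately show ?thesis using True tp by (simp add: mult_nonneg_nonpos)
    next
      case False
      hence "f \<omega> a = 0" for \<omega> by (auto simp: f_def)
      thus ?thesis by simp
    qed
    have "0 \<le> (\<integral>a. - (\<integral>\<omega>. f \<omega> a \<partial>M) \<partial>lborel)"
      by (rule Bochner_Integration.integral_nonneg) (use inner in auto)
    thus ?thesis by simp
  qed
  finally show ?thesis .
qed

lemma symm_part:
  fixes M :: "'a measure" and X :: "'a \<Rightarrow> real"
  assumes P: "prob_space M" and Xm[measurable]: "X \<in> borel_measurable M"
    and S: "symmetric_rv M X"
  shows "(\<integral>\<omega>. hh (t * X \<omega>) \<partial>M) = 0"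
proof -
  have "(\<integral>\<omega>. hh (t * X \<omega>) \<partial>M) = (\<integral>x. hh (t * x) \<partial>distr M borel X)"
    by (subst integral_distr) auto
  also have "\<dots> = (\<integral>x. hh (t * x) \<partial>distr M borel (\<lambda>\<omega>. - X \<omega>))"
    using S unfolding symmetric_rv_def by simp
  also have "\<dots> = (\<integral>\<omega>. hh (t * (- X \<omega>)) \<partial>M)"
    by (subst integral_distr) auto
  also have "\<dots> = - (\<integral>\<omega>. hh (t * X \<omega>) \<partial>M)"
    using hh_odd[of "t * X _"] by simp
  finally show ?thesis by simp
qed

theorem lemma3p1:
  fixes M :: "'a measure" and X :: "'a \<Rightarrow> real"
  assumes "prob_space M"
    and "X \<in> borel_measurable M"
  defines "L \<equiv> (\<lambda>t. \<integral>\<omega>. exp (t * X \<omega> - t\<^sup>2 / 2 * (X \<omega>)\<^sup>2) \<partial>M)"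
  shows "(heavy_on_left M X \<longrightarrow> (\<forall>t\<ge>0. L t \<le> 1))
       \<and> (heavy_on_right M X \<longrightarrow> (\<forall>t\<le>0. L t \<le> 1))
       \<and> (symmetric_rv M X \<longrightarrow> (\<forall>t. L t \<le> 1))"
proof (intro conjI impI allI)
  fix t :: real assume "heavy_on_left M X" "t \<ge> 0"
  thus "L t \<le> 1" unfolding L_def using assms(1,2) by (intro reduce left_part) auto
next
  fix t :: real assume H: "heavy_on_right M X" and t: "t \<le> 0"
  have m: "(\<lambda>\<omega>. - X \<omega>) \<in> borel_measurable M" using assms(2) by measurable
  have "(\<integral>\<omega>. hh ((-t) * (- X \<omega>)) \<partial>M) \<le> 0"
    using left_part[OF assms(1) m, of "-t"] H t unfolding heavy_on_right_def by simp
  thus "L t \<le> 1" unfolding L_def using assms(1,2) by (intro reduce) auto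
next
  fix t :: real assume "symmetric_rv M X"
  thus "L t \<le> 1" unfolding L_def using assms(1,2) symm_part[OF assms(1,2)] by (intro reduce) auto
qed

end
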